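(* Let $n\geq 2$. $\mathrm{Aut}(\mathbf{D}_n)$, with the topology of pointwise convergence, is not extremely amenable.
   Context: Fix $n\geq 2$ and a set $D_n\subseteq\mathbb{Q}^n$ which is dense in $\mathbb{Q}^n$ (product topology) and such that no two distinct points of $D_n$ share a common coordinate; $\mathbf{D}_n=(D_n,<)$ with $<$ the product order ($\mathbf{a}<\mathbf{b}$ iff $a_i\leq b_i$ for all $i$ and $\mathbf{a}\neq\mathbf{b}$). A topological group is extremely amenable if every continuous action of it on a compact Hausdorff space has a fixed point. *)

theory Defs
  imports "HOL-Analysis.Analysis"
begin

definition prod_less :: "rat^'n \<Rightarrow> rat^'n \<Rightarrow> bool" where
  "prod_less a b \<longleftrightarrow> (\<forall>i. a $ i \<le> b $ i) \<and> a \<noteq> b"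

definition dense_in_Qn :: "(rat^'n) set \<Rightarrow> bool" where
  "dense_in_Qn D \<longleftrightarrow>
     (\<forall>a b. (\<forall>i. a $ i < b $ i) \<longrightarrow> (\<exists>d\<in>D. \<forall>i. a $ i < d $ i \<and> d $ i < b $ i))"

definition no_common_coord :: "(rat^'n) set \<Rightarrow> bool" where
  "no_common_coord D \<longleftrightarrow> (\<forall>x\<in>D. \<forall>y\<in>D. x \<noteq> y \<longrightarrow> (\<forall>i. x $ i \<noteq> y $ i))"

definition Aut_D :: "(rat^'n) set \<Rightarrow> (rat^'n \<Rightarrow> rat^'n) set" where
  "Aut_D D = {f \<in> D \<rightarrow>\<^sub>E D. bij_betw f D D \<and>
      (\<forall>x\<in>D. \<forall>y\<in>D. prod_less x y \<longleftrightarrow> prod_less (f x) (f y))}"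

text \<open>Topology of pointwise convergence on Aut(D): subspace of the product of discrete copies of D.\<close>
definition Aut_topology :: "(rat^'n) set \<Rightarrow> (rat^'n \<Rightarrow> rat^'n) topology" where
  "Aut_topology D = subtopology (product_topology (\<lambda>_. discrete_topology D) D) (Aut_D D)"

text \<open>Extreme amenability of a topological group (carrier G, multiplication mul, unit e,
  topology T), relative to the type 'x of the compact Hausdorff spaces acted on.\<close>
definition extremely_amenable ::
  "'g set \<Rightarrow> ('g \<Rightarrow> 'g \<Rightarrow> 'g) \<Rightarrow> 'g \<Rightarrow> 'g topology \<Rightarrow> 'x itself \<Rightarrow> bool" where
  "extremely_amenable G mul e T (_ :: 'x itself) \<longleftrightarrow>
     (\<forall>(X :: 'x topology) (act :: 'g \<Rightarrow> 'x \<Rightarrow> 'x).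
        compact_space X \<and> Hausdorff_space X \<and> topspace X \<noteq> {} \<and>
        continuous_map (prod_topology T X) X (\<lambda>(g, x). act g x) \<and>
        (\<forall>x\<in>topspace X. act e x = x) \<and>
        (\<forall>g\<in>G. \<forall>h\<in>G. \<forall>x\<in>topspace X. act (mul g h) x = act g (act h x))
      \<longrightarrow> (\<exists>x\<in>topspace X. \<forall>g\<in>G. act g x = x))"

end

theory Submission
  imports Defs "HOL-Library.Countable"
begin


definition imtop :: "('a \<Rightarrow> 'b) \<Rightarrow> 'a topology \<Rightarrow> 'b topology" where
  "imtop f X = topology (\<lambda>U. openin X (f -` U) \<and> U \<subseteq> f ` topspace X)"

lemma openin_imtop:
  assumes "inj f"
  shows "openin (imtop f X) U \<longleftrightarrow> openin X (f -` U) \<and> U \<subseteq> f ` topspace X"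
proof -
  have "istopology (\<lambda>U. openin X (f -` U) \<and> U \<subseteq> f ` topspace X)"
    unfolding istopology_def
  proof (intro conjI[of "\<forall>S T. _ S \<longrightarrow> _ T \<longrightarrow> _ (S \<inter> T)"] allI impI)
    fix S T assume "openin X (f -` S) \<and> S \<subseteq> f ` topspace X" "openin X (f -` T) \<and> T \<subseteq> f ` topspace X"
    then show "openin X (f -` (S \<inter> T)) \<and> S \<inter> T \<subseteq> f ` topspace X"
      by (auto simp: vimage_Int)
  next
    fix K assume "\<forall>K\<in>K. openin X (f -` K) \<and> K \<subseteq> f ` topspace X"
    then show "openin X (f -` \<Union> K) \<and> \<Union> K \<subseteq> f ` topspace X"
      by (auto simp: vimage_Union intro!: openin_Union)
  qed
  then show ?thesis unfolding imtop_def by (simp add: topology_inverse')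
qed

lemma topspace_imtop:
  assumes "inj f" shows "topspace (imtop f X) = f ` topspace X"
proof -
  have "openin (imtop f X) (f ` topspace X)"
    using assms by (simp add: openin_imtop inj_vimage_image_eq)
  then have "f ` topspace X \<subseteq> topspace (imtop f X)" by (rule openin_subset)
  moreover have "topspace (imtop f X) \<subseteq> f ` topspace X"
    using openin_topspace[of "imtop f X"] openin_imtop[OF assms] by blast
  ultimately show ?thesis by blast
qed

lemma homeomorphic_maps_imtop:
  assumes "inj f" shows "homeomorphic_maps X (imtop f X) f (inv f)"
  unfolding homeomorphic_maps_def
proof (intro conjI ballI)
  show "continuous_map X (imtop f X) f"
    unfolding continuous_map_def
  proof (intro conjI allI impI)
    show "f \<in> topspace X \<rightarrow> topspace (imtop f X)" using assms by (auto simp: topspace_imtop)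
    fix U assume "openin (imtop f X) U"
    then have "openin X (f -` U)" using openin_imtop[OF assms] by blast
    moreover have "{x \<in> topspace X. f x \<in> U} = topspace X \<inter> f -` U" by blast
    ultimately show "openin X {x \<in> topspace X. f x \<in> U}" by (simp add: openin_Int)
  qed
next
  show "continuous_map (imtop f X) X (inv f)"
    unfolding continuous_map_def using assms
  proof (intro conjI allI impI)
    show "inv f \<in> topspace (imtop f X) \<rightarrow> topspace X" using assms by (auto simp: topspace_imtop)
    fix U assume U: "openin X U"
    have "{x \<in> topspace (imtop f X). inv f x \<in> U} = f ` U"
      using assms openin_subset[OF U] by (auto simp: topspace_imtop)
    moreover have "openin (imtop f X) (f ` U)"
      using assms U openin_subset[OF U] by (simp add: openin_imtop inj_vimage_image_eq image_mono)
    ultimately show "openin (imtop f X) {x \<in> topspace (imtop f X). inv f x \<in> U}" by simp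
  qed
qed (use assms in \<open>auto simp: topspace_imtop\<close>)

lemma EA_transfer:
  fixes emb :: "'y \<Rightarrow> 'x" and T :: "'g topology"
  assumes EA: "extremely_amenable G mul e T TYPE('x)" and inj: "inj emb"
  shows "extremely_amenable G mul e T TYPE('y)"
  unfolding extremely_amenable_def
proof (intro allI impI)
  fix X :: "'y topology" and act :: "'g \<Rightarrow> 'y \<Rightarrow> 'y"
  assume H: "compact_space X \<and> Hausdorff_space X \<and> topspace X \<noteq> {} \<and>
        continuous_map (prod_topology T X) X (\<lambda>(g, x). act g x) \<and>
        (\<forall>x\<in>topspace X. act e x = x) \<and>
        (\<forall>g\<in>G. \<forall>h\<in>G. \<forall>x\<in>topspace X. act (mul g h) x = act g (act h x))"
  define X' where "X' = imtop emb X"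
  define act' where "act' = (\<lambda>g z. emb (act g (inv emb z)))"
  have hm: "homeomorphic_maps X X' emb (inv emb)"
    unfolding X'_def using inj by (rule homeomorphic_maps_imtop)
  then have hs: "X homeomorphic_space X'" by (rule homeomorphic_maps_imp_homeomorphic_space)
  have ts: "topspace X' = emb ` topspace X" unfolding X'_def using inj by (rule topspace_imtop)
  have c1: "continuous_map X' X (inv emb)" and c2: "continuous_map X X' emb"
    using hm by (auto simp: homeomorphic_maps_def)
  have "continuous_map (prod_topology T X') (prod_topology T X) (\<lambda>p. (fst p, inv emb (snd p)))"
    by (intro continuous_map_pairedI continuous_map_fst continuous_map_compose[OF continuous_map_snd c1, unfolded o_def])
  then have "continuous_map (prod_topology T X') X ((\<lambda>(g, x). act g x) \<circ> (\<lambda>p. (fst p, inv emb (snd p))))"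
    using H continuous_map_compose by blast
  then have "continuous_map (prod_topology T X') X' (emb \<circ> ((\<lambda>(g, x). act g x) \<circ> (\<lambda>p. (fst p, inv emb (snd p)))))"
    using c2 continuous_map_compose by blast
  moreover have "(emb \<circ> ((\<lambda>(g, x). act g x) \<circ> (\<lambda>p. (fst p, inv emb (snd p))))) = (\<lambda>(g, x). act' g x)"
    by (auto simp: act'_def)
  ultimately have cont: "continuous_map (prod_topology T X') X' (\<lambda>(g, x). act' g x)" by simp
  have "compact_space X' \<and> Hausdorff_space X' \<and> topspace X' \<noteq> {} \<and>
        continuous_map (prod_topology T X') X' (\<lambda>(g, x). act' g x) \<and>
        (\<forall>x\<in>topspace X'. act' e x = x) \<and>
        (\<forall>g\<in>G. \<forall>h\<in>G. \<forall>x\<in>topspace X'. act' (mul g h) x = act' g (act' h x))"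
    using H hs cont inj
    by (auto simp: ts act'_def homeomorphic_compact_space homeomorphic_Hausdorff_space)
  then obtain z where z: "z \<in> topspace X'" "\<forall>g\<in>G. act' g z = z"
    using EA unfolding extremely_amenable_def by blast
  then obtain y where y: "y \<in> topspace X" "z = emb y" using ts by auto
  show "\<exists>x\<in>topspace X. \<forall>g\<in>G. act g x = x"
  proof (intro bexI[OF _ y(1)] ballI)
    fix g assume "g \<in> G"
    then have "emb (act g y) = emb y" using z y inj by (auto simp: act'_def)
    then show "act g y = y" using inj by (simp add: inj_eq)
  qed
qed



definition twisted :: "('n \<Rightarrow> 'n) \<Rightarrow> ((rat^'n) \<times> (rat^'n)) set \<Rightarrow> bool" where
  "twisted \<sigma> P \<longleftrightarrow> (\<forall>x y x' y'. (x,y) \<in> P \<longrightarrow> (x',y') \<in> P \<longrightarrow>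
      (\<forall>i. x$i < x'$i \<longleftrightarrow> y$(\<sigma> i) < y'$(\<sigma> i)))"

lemma rat_gap:
  fixes S T :: "rat set"
  assumes "finite S" "finite T" "\<forall>s\<in>S. \<forall>t\<in>T. s < t"
  shows "\<exists>l h. l < h \<and> (\<forall>s\<in>S. s \<le> l) \<and> (\<forall>t\<in>T. h \<le> t)"
proof -
  consider "S = {}" "T = {}" | "S = {}" "T \<noteq> {}" | "S \<noteq> {}" "T = {}" | "S \<noteq> {}" "T \<noteq> {}" by blast
  then show ?thesis
  proof cases
    case 1 then show ?thesis by (intro exI[of _ 0] exI[of _ 1]) simp
  next
    case 2
    have "\<forall>t\<in>T. Min T \<le> t" using assms(2) by simp
    then show ?thesis using 2 by (intro exI[of _ "Min T - 1"] exI[of _ "Min T"]) simp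
  next
    case 3
    have "\<forall>s\<in>S. s \<le> Max S" using assms(1) by simp
    then show ?thesis using 3 by (intro exI[of _ "Max S"] exI[of _ "Max S + 1"]) simp
  next
    case 4
    have "\<forall>t\<in>T. Min T \<le> t" using assms(2) by simp
    moreover have "\<forall>s\<in>S. s \<le> Max S" using assms(1) by simp
    moreover have "Max S < Min T" using assms 4 by simp
    ultimately show ?thesis by blast
  qed
qed

lemma forth_step:
  fixes D :: "(rat^'n) set" and \<sigma> :: "'n \<Rightarrow> 'n"
  assumes dense: "dense_in_Qn D" and ncc: "no_common_coord D" and bij: "bij \<sigma>"
    and fin: "finite P" and PD: "P \<subseteq> D \<times> D" and tw: "twisted \<sigma> P" and a: "a \<in> D"
  shows "\<exists>b\<in>D. twisted \<sigma> (insert (a,b) P)"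
proof (cases "\<exists>b. (a,b) \<in> P")
  case True
  then obtain b where "(a,b) \<in> P" by blast
  moreover have "b \<in> D" using PD \<open>(a,b) \<in> P\<close> by auto
  ultimately show ?thesis using tw by (metis insert_absorb)
next
  case False
  define \<tau> where "\<tau> = inv \<sigma>"
  have st: "\<sigma> (\<tau> j) = j" for j using bij by (simp add: \<tau>_def surj_f_inv_f bij_is_surj)
  have ts: "\<tau> (\<sigma> i) = i" for i using bij by (simp add: \<tau>_def inv_f_f bij_is_inj)
  define S where "S j = (\<lambda>p. snd p $ j) ` {p \<in> P. fst p $ (\<tau> j) < a $ (\<tau> j)}" for j
  define T where "T j = (\<lambda>p. snd p $ j) ` {p \<in> P. a $ (\<tau> j) < fst p $ (\<tau> j)}" for j
  have "\<exists>l h. l < h \<and> (\<forall>s\<in>S j. s \<le> l) \<and> (\<forall>t\<in>T j. h \<le> t)" for j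
  proof (rule rat_gap)
    show "finite (S j)" "finite (T j)" using fin by (auto simp: S_def T_def)
    show "\<forall>s\<in>S j. \<forall>t\<in>T j. s < t"
    proof (intro ballI)
      fix s t assume "s \<in> S j" "t \<in> T j"
      then obtain x y x' y' where "(x,y) \<in> P" "(x',y') \<in> P" "x $ \<tau> j < a $ \<tau> j" "a $ \<tau> j < x' $ \<tau> j"
        "s = y $ j" "t = y' $ j"
        by (auto simp: S_def T_def)
      then have "x $ \<tau> j < x' $ \<tau> j" by (meson order.strict_trans)
      then have "y $ \<sigma> (\<tau> j) < y' $ \<sigma> (\<tau> j)" using tw \<open>(x,y) \<in> P\<close> \<open>(x',y') \<in> P\<close>
        unfolding twisted_def by blast
      then show "s < t" using \<open>s = y $ j\<close> \<open>t = y' $ j\<close> st by simp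
    qed
  qed
  then obtain l h where lh: "\<And>j. l j < h j" "\<And>j s. s \<in> S j \<Longrightarrow> s \<le> l j" "\<And>j t. t \<in> T j \<Longrightarrow> h j \<le> t"
    by metis
  obtain b where b: "b \<in> D" "\<And>j. (\<chi> j. l j) $ j < b $ j \<and> b $ j < (\<chi> j. h j) $ j"
    using dense lh(1) unfolding dense_in_Qn_def by (metis vec_lambda_beta)
  have bl: "l j < b $ j" and bh: "b $ j < h j" for j using b(2)[of j] by auto
  have key: "x $ i < a $ i \<longleftrightarrow> y $ (\<sigma> i) < b $ (\<sigma> i)"
    and key2: "a $ i < x $ i \<longleftrightarrow> b $ (\<sigma> i) < y $ (\<sigma> i)"
    if xy: "(x,y) \<in> P" for x y i
  proof -
    have "x \<noteq> a" using xy False by blast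
    then have ne: "x $ i \<noteq> a $ i" using ncc PD xy a unfolding no_common_coord_def by blast
    show "x $ i < a $ i \<longleftrightarrow> y $ (\<sigma> i) < b $ (\<sigma> i)"
    proof (cases "x $ i < a $ i")
      case True
      then have "y $ (\<sigma> i) \<in> S (\<sigma> i)" unfolding S_def using xy ts by force
      then show ?thesis using True lh(2) bl by (meson le_less_trans)
    next
      case False
      then have "a $ i < x $ i" using ne by auto
      then have "y $ (\<sigma> i) \<in> T (\<sigma> i)" unfolding T_def using xy ts by force
      then show ?thesis using False lh(3) bh by (meson less_le_trans not_less_iff_gr_or_eq)
    qed
    show "a $ i < x $ i \<longleftrightarrow> b $ (\<sigma> i) < y $ (\<sigma> i)"
    proof (cases "x $ i < a $ i")
      case True
      then have "y $ (\<sigma> i) \<in> S (\<sigma> i)" unfolding S_def using xy ts by force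
      then show ?thesis using True lh(2) bl by (meson le_less_trans not_less_iff_gr_or_eq)
    next
      case False
      then have "a $ i < x $ i" using ne by auto
      then have "y $ (\<sigma> i) \<in> T (\<sigma> i)" unfolding T_def using xy ts by force
      then show ?thesis using \<open>a $ i < x $ i\<close> lh(3) bh by (meson less_le_trans)
    qed
  qed
  have "twisted \<sigma> (insert (a,b) P)"
    unfolding twisted_def
  proof (intro allI impI)
    fix x y x' y' i assume "(x,y) \<in> insert (a,b) P" "(x',y') \<in> insert (a,b) P"
    then consider "(x,y) = (a,b)" "(x',y') = (a,b)" | "(x,y) = (a,b)" "(x',y') \<in> P"
      | "(x,y) \<in> P" "(x',y') = (a,b)" | "(x,y) \<in> P" "(x',y') \<in> P" by blast
    then show "x $ i < x' $ i \<longleftrightarrow> y $ \<sigma> i < y' $ \<sigma> i"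
    proof cases
      case 4 then show ?thesis using tw unfolding twisted_def by blast
    qed (use key key2 in auto)
  qed
  then show ?thesis using b(1) by blast
qed

lemma twisted_converse:
  assumes "bij \<sigma>" "twisted \<sigma> P" shows "twisted (inv \<sigma>) (P\<inverse>)"
  unfolding twisted_def
proof (intro allI impI)
  fix x y x' y' i assume "(x,y) \<in> P\<inverse>" "(x',y') \<in> P\<inverse>"
  then have "(y,x) \<in> P" "(y',x') \<in> P" by auto
  then have "y $ (inv \<sigma> i) < y' $ (inv \<sigma> i) \<longleftrightarrow> x $ \<sigma> (inv \<sigma> i) < x' $ \<sigma> (inv \<sigma> i)"
    using assms(2) unfolding twisted_def by blast
  then show "x $ i < x' $ i \<longleftrightarrow> y $ inv \<sigma> i < y' $ inv \<sigma> i"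
    using assms(1) by (simp add: surj_f_inv_f bij_is_surj)
qed

lemma back_step:
  fixes D :: "(rat^'n) set" and \<sigma> :: "'n \<Rightarrow> 'n"
  assumes dense: "dense_in_Qn D" and ncc: "no_common_coord D" and bij: "bij \<sigma>"
    and fin: "finite P" and PD: "P \<subseteq> D \<times> D" and tw: "twisted \<sigma> P" and b: "b \<in> D"
  shows "\<exists>a\<in>D. twisted \<sigma> (insert (a,b) P)"
proof -
  have "\<exists>a\<in>D. twisted (inv \<sigma>) (insert (b,a) (P\<inverse>))"
    using forth_step[OF dense ncc bij_imp_bij_inv[OF bij] _ _ twisted_converse[OF bij tw] b] fin PD by auto
  then obtain a where "a \<in> D" "twisted (inv \<sigma>) (insert (b,a) (P\<inverse>))" by blast
  then have "twisted (inv (inv \<sigma>)) ((insert (b,a) (P\<inverse>))\<inverse>)"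
    by (intro twisted_converse bij_imp_bij_inv bij)
  moreover have "(insert (b,a) (P\<inverse>))\<inverse> = insert (a,b) P" by auto
  ultimately show ?thesis using \<open>a \<in> D\<close> bij by (auto simp: inv_inv_eq)
qed



lemma twisted_unique:
  assumes ncc: "no_common_coord D" and PD: "PP \<subseteq> D \<times> D" and tw: "twisted \<sigma> PP"
    and p: "(a,b) \<in> PP" "(a',b') \<in> PP"
  shows "a = a' \<longleftrightarrow> b = b'"
proof
  assume "a = a'"
  show "b = b'"
  proof (rule ccontr)
    assume "b \<noteq> b'"
    obtain j :: 'a where True by blast
    have "b $ \<sigma> j \<noteq> b' $ \<sigma> j" using ncc PD p \<open>b \<noteq> b'\<close> unfolding no_common_coord_def by blast
    moreover have "\<not> b $ \<sigma> j < b' $ \<sigma> j" "\<not> b' $ \<sigma> j < b $ \<sigma> j"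
      using tw p \<open>a = a'\<close> unfolding twisted_def by blast+
    ultimately show False by auto
  qed
next
  assume "b = b'"
  show "a = a'"
  proof (rule ccontr)
    assume "a \<noteq> a'"
    obtain j :: 'a where True by blast
    have "a $ j \<noteq> a' $ j" using ncc PD p \<open>a \<noteq> a'\<close> unfolding no_common_coord_def by blast
    moreover have "\<not> a $ j < a' $ j" "\<not> a' $ j < a $ j"
      using tw p \<open>b = b'\<close> unfolding twisted_def by blast+
    ultimately show False by auto
  qed
qed

lemma prod_less_ncc:
  assumes ncc: "no_common_coord D" and "x \<in> D" "y \<in> D" "x \<noteq> y"
  shows "prod_less x y \<longleftrightarrow> (\<forall>i. x $ i < y $ i)"
proof -
  have "x $ i \<noteq> y $ i" for i using assms unfolding no_common_coord_def by blast
  then show ?thesis using assms(4) unfolding prod_less_def by (auto simp: order.strict_iff_order)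
qed

lemma total_twisted_aut:
  fixes D :: "(rat^'n) set"
  assumes ncc: "no_common_coord D" and bij: "bij \<sigma>" and PD: "PP \<subseteq> D \<times> D" and tw: "twisted \<sigma> PP"
    and tot: "\<forall>a\<in>D. \<exists>b. (a,b) \<in> PP" and sur: "\<forall>b\<in>D. \<exists>a. (a,b) \<in> PP"
  shows "\<exists>g\<in>Aut_D D. \<forall>a b. (a,b) \<in> PP \<longrightarrow> g a = b"
proof -
  define g where "g = restrict (\<lambda>a. SOME b. (a,b) \<in> PP) D"
  have gP: "(a, g a) \<in> PP" if "a \<in> D" for a
    using tot that unfolding g_def by (auto intro: someI_ex)
  have gD: "g a \<in> D" if "a \<in> D" for a using gP[OF that] PD by auto
  have geq: "g a = b" if "(a,b) \<in> PP" for a b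
  proof -
    have "a \<in> D" using that PD by auto
    then show ?thesis using twisted_unique[OF ncc PD tw gP[OF \<open>a \<in> D\<close>] that] by simp
  qed
  have ginj: "g a = g a' \<longleftrightarrow> a = a'" if "a \<in> D" "a' \<in> D" for a a'
    using twisted_unique[OF ncc PD tw gP[OF that(1)] gP[OF that(2)]] by simp
  have "g \<in> D \<rightarrow>\<^sub>E D" using gD unfolding g_def by auto
  moreover have "bij_betw g D D"
    unfolding bij_betw_def
  proof
    show "inj_on g D" using ginj by (auto simp: inj_on_def)
    show "g ` D = D"
    proof
      show "g ` D \<subseteq> D" using gD by auto
      show "D \<subseteq> g ` D"
      proof
        fix b assume "b \<in> D"
        then obtain a where "(a,b) \<in> PP" using sur by blast
        then have "a \<in> D" "g a = b" using geq PD by auto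
        then show "b \<in> g ` D" by (intro image_eqI[of b g a]) simp_all
      qed
    qed
  qed
  moreover have "prod_less x y \<longleftrightarrow> prod_less (g x) (g y)" if "x \<in> D" "y \<in> D" for x y
  proof (cases "x = y")
    case True then show ?thesis by (simp add: prod_less_def)
  next
    case False
    then have ne: "g x \<noteq> g y" using ginj that by simp
    have "prod_less x y \<longleftrightarrow> (\<forall>i. x $ i < y $ i)" using prod_less_ncc[OF ncc that False] .
    also have "\<dots> \<longleftrightarrow> (\<forall>i. g x $ \<sigma> i < g y $ \<sigma> i)"
      using tw gP[OF that(1)] gP[OF that(2)] unfolding twisted_def by blast
    also have "\<dots> \<longleftrightarrow> (\<forall>j. g x $ j < g y $ j)"
    proof -
      have sj: "\<sigma> (inv \<sigma> j) = j" for j using bij by (simp add: surj_f_inv_f bij_is_surj)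
      show ?thesis
      proof
        assume A: "\<forall>i. g x $ \<sigma> i < g y $ \<sigma> i"
        show "\<forall>j. g x $ j < g y $ j"
        proof
          fix j show "g x $ j < g y $ j" using A[rule_format, of "inv \<sigma> j"] sj by simp
        qed
      qed simp
    qed
    also have "\<dots> \<longleftrightarrow> prod_less (g x) (g y)"
      using prod_less_ncc[OF ncc gD[OF that(1)] gD[OF that(2)] ne] by simp
    finally show ?thesis .
  qed
  ultimately have "g \<in> Aut_D D" unfolding Aut_D_def by blast
  then show ?thesis using geq by blast
qed

lemma countable_vec: "countable (UNIV :: (rat^'n) set)"
proof -
  have "UNIV = range (vec_lambda :: ('n \<Rightarrow> rat) \<Rightarrow> rat^'n)"
    by (metis surj_def vec_lambda_eta)
  moreover have "countable (UNIV :: ('n \<Rightarrow> rat) set)" by simp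
  ultimately show ?thesis by (metis countable_image)
qed

lemma extend_aut:
  fixes D :: "(rat^'n) set" and \<sigma> :: "'n \<Rightarrow> 'n"
  assumes dense: "dense_in_Qn D" and ncc: "no_common_coord D" and bij: "bij \<sigma>"
    and fin: "finite P0" and PD: "P0 \<subseteq> D \<times> D" and tw: "twisted \<sigma> P0"
  shows "\<exists>g\<in>Aut_D D. \<forall>a b. (a,b) \<in> P0 \<longrightarrow> g a = b"
proof -
  have "\<exists>d\<in>D. \<forall>i. (\<chi> i. (0::rat)) $ i < d $ i \<and> d $ i < (\<chi> i. (1::rat)) $ i"
    using dense unfolding dense_in_Qn_def by (metis vec_lambda_beta zero_less_one)
  then have Dne: "D \<noteq> {}" by blast
  have cD: "countable D" using countable_vec countable_subset by blast
  define e where "e = from_nat_into D"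
  have eD: "e k \<in> D" for k unfolding e_def using Dne by (rule from_nat_into)
  have esur: "\<exists>k. e k = a" if "a \<in> D" for a
    using that cD Dne unfolding e_def by (metis from_nat_into_to_nat_on)
  define nb where "nb P a = (SOME b. b \<in> D \<and> twisted \<sigma> (insert (a,b) P))" for P a
  define na where "na P b = (SOME a. a \<in> D \<and> twisted \<sigma> (insert (a,b) P))" for P b
  define stp where "stp k P = insert (na (insert (e k, nb P (e k)) P) (e k), e k) (insert (e k, nb P (e k)) P)" for k P
  define seq where "seq = rec_nat P0 stp"
  have seq0: "seq 0 = P0" and seqS: "seq (Suc k) = stp k (seq k)" for k by (simp_all add: seq_def)
  have good: "finite P \<and> P \<subseteq> D \<times> D \<and> twisted \<sigma> P \<Longrightarrow>
      finite (stp k P) \<and> stp k P \<subseteq> D \<times> D \<and> twisted \<sigma> (stp k P)" for P k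
  proof -
    assume H: "finite P \<and> P \<subseteq> D \<times> D \<and> twisted \<sigma> P"
    have "\<exists>b. b \<in> D \<and> twisted \<sigma> (insert (e k,b) P)"
      using forth_step[OF dense ncc bij _ _ _ eD] H by blast
    then have 1: "nb P (e k) \<in> D \<and> twisted \<sigma> (insert (e k, nb P (e k)) P)"
      unfolding nb_def by (rule someI_ex)
    define P1 where "P1 = insert (e k, nb P (e k)) P"
    have H1: "finite P1 \<and> P1 \<subseteq> D \<times> D \<and> twisted \<sigma> P1" using H 1 eD unfolding P1_def by auto
    have "\<exists>a. a \<in> D \<and> twisted \<sigma> (insert (a, e k) P1)"
      using back_step[OF dense ncc bij _ _ _ eD] H1 by blast
    then have 2: "na P1 (e k) \<in> D \<and> twisted \<sigma> (insert (na P1 (e k), e k) P1)"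
      unfolding na_def by (rule someI_ex)
    show ?thesis using H1 2 eD unfolding stp_def P1_def[symmetric] by auto
  qed
  have inv: "finite (seq k) \<and> seq k \<subseteq> D \<times> D \<and> twisted \<sigma> (seq k)" for k
  proof (induction k)
    case 0 then show ?case using fin PD tw by (simp add: seq0)
  next
    case (Suc k) then show ?case using good by (simp add: seqS)
  qed
  have mono1: "seq k \<subseteq> seq (Suc k)" for k by (auto simp: seqS stp_def)
  have monok: "k \<le> m \<Longrightarrow> seq k \<subseteq> seq m" for k m
    using lift_Suc_mono_le[of seq, OF mono1] by blast
  define PP where "PP = (\<Union>k. seq k)"
  have PPD: "PP \<subseteq> D \<times> D" using inv unfolding PP_def by blast
  have twPP: "twisted \<sigma> PP"
    unfolding twisted_def
  proof (intro allI impI)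
    fix x y x' y' i assume "(x,y) \<in> PP" "(x',y') \<in> PP"
    then obtain k k' where "(x,y) \<in> seq k" "(x',y') \<in> seq k'" unfolding PP_def by blast
    then have "(x,y) \<in> seq (max k k')" "(x',y') \<in> seq (max k k')"
      using monok[of k "max k k'"] monok[of k' "max k k'"] by auto
    then show "x $ i < x' $ i \<longleftrightarrow> y $ \<sigma> i < y' $ \<sigma> i"
      using inv[of "max k k'"] unfolding twisted_def by blast
  qed
  have tot: "\<forall>a\<in>D. \<exists>b. (a,b) \<in> PP"
  proof
    fix a assume "a \<in> D"
    then obtain k where "e k = a" using esur by blast
    then have "(a, nb (seq k) a) \<in> seq (Suc k)" by (auto simp: seqS stp_def)
    then show "\<exists>b. (a,b) \<in> PP" unfolding PP_def by blast
  qed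
  have sur: "\<forall>b\<in>D. \<exists>a. (a,b) \<in> PP"
  proof
    fix b assume "b \<in> D"
    then obtain k where "e k = b" using esur by blast
    then have "\<exists>a. (a, b) \<in> seq (Suc k)" by (auto simp: seqS stp_def)
    then show "\<exists>a. (a,b) \<in> PP" unfolding PP_def by blast
  qed
  obtain g where "g \<in> Aut_D D" "\<forall>a b. (a,b) \<in> PP \<longrightarrow> g a = b"
    using total_twisted_aut[OF ncc bij PPD twPP tot sur] by blast
  moreover have "P0 \<subseteq> PP" using seq0 unfolding PP_def by blast
  ultimately show ?thesis by blast
qed



lemma approx_less:
  fixes u v :: rat and p q :: int
  assumes "p \<noteq> q" "of_int p - 1/3 < u" "u < of_int p + 1/3" "of_int q - 1/3 < v" "v < of_int q + 1/3"
  shows "u < v \<longleftrightarrow> p < q"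
proof (cases "p < q")
  case True
  then have "p + 1 \<le> q" by simp
  then have "(of_int p :: rat) + 1 \<le> of_int q" by (metis of_int_1 of_int_add of_int_le_iff)
  then show ?thesis using True assms by linarith
next
  case False
  then have "q + 1 \<le> p" using assms(1) by simp
  then have "(of_int q :: rat) + 1 \<le> of_int p" by (metis of_int_1 of_int_add of_int_le_iff)
  then show ?thesis using False assms by linarith
qed

lemma suc_mod_inj:
  fixes a b N :: nat
  assumes "a < N" "b < N" "Suc a mod N = Suc b mod N"
  shows "a = b"
proof -
  have "Suc a mod N = (if Suc a = N then 0 else Suc a)" using assms(1) by auto
  moreover have "Suc b mod N = (if Suc b = N then 0 else Suc b)" using assms(2) by auto
  ultimately show ?thesis using assms(3) by (auto split: if_splits)
qed

lemma cycle_aut: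
  fixes D :: "(rat^'n) set"
  assumes card: "CARD('n) \<ge> 2" and dense: "dense_in_Qn D" and ncc: "no_common_coord D"
  shows "\<exists>x::nat \<Rightarrow> rat^'n. \<exists>g\<in>Aut_D D.
           (\<forall>j<CARD('n). x j \<in> D \<and> g (x j) = x (Suc j mod CARD('n))) \<and> x 0 \<noteq> x 1"
proof -
  define N where "N = CARD('n)"
  have N2: "N \<ge> 2" using card N_def by simp
  obtain idx :: "'n \<Rightarrow> nat" where bidx: "bij_betw idx UNIV {0..<N}"
    using ex_bij_betw_finite_nat[of "UNIV :: 'n set"] unfolding N_def by auto
  define ridx where "ridx = inv_into UNIV idx"
  have idxN: "idx i < N" for i using bidx by (auto simp: bij_betw_def)
  have idx_ridx: "idx (ridx m) = m" if "m < N" for m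
    using bidx that unfolding ridx_def by (simp add: bij_betw_inv_into_right)
  have ridx_idx: "ridx (idx i) = i" for i
    using bidx unfolding ridx_def by (simp add: bij_betw_inv_into_left)
  have idx_inj: "idx i = idx i' \<Longrightarrow> i = i'" for i i' using ridx_idx by metis
  define \<sigma> where "\<sigma> i = ridx (Suc (idx i) mod N)" for i
  have idx_\<sigma>: "idx (\<sigma> i) = Suc (idx i) mod N" for i
    unfolding \<sigma>_def using N2 by (intro idx_ridx) simp
  have "inj \<sigma>"
  proof (rule injI)
    fix i i' assume "\<sigma> i = \<sigma> i'"
    then have "Suc (idx i) mod N = Suc (idx i') mod N" using idx_\<sigma> by metis
    then have "idx i = idx i'" using suc_mod_inj idxN by blast
    then show "i = i'" by (rule idx_inj)
  qed
  then have bij: "bij \<sigma>" by (simp add: bij_def finite_UNIV_inj_surj)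
  define c where "c j i = (int j - int (idx i)) mod int N" for j i
  have c\<sigma>: "c (Suc j mod N) (\<sigma> i) = c j i" for j i
  proof -
    have "c (Suc j mod N) (\<sigma> i) = (int (Suc j) mod int N - int (Suc (idx i)) mod int N) mod int N"
      unfolding c_def idx_\<sigma> by (simp add: of_nat_mod)
    also have "\<dots> = (int (Suc j) - int (Suc (idx i))) mod int N" by (simp add: mod_diff_eq)
    also have "\<dots> = c j i" unfolding c_def by simp
    finally show ?thesis .
  qed
  have cinj: "j = l" if "j < N" "l < N" "c j i = c l i" for j l i
  proof (rule ccontr)
    assume "j \<noteq> l"
    have "int N dvd (int j - int (idx i)) - (int l - int (idx i))"
      using that(3) unfolding c_def by (simp add: mod_eq_dvd_iff)
    then have "int N dvd int j - int l" by simp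
    moreover have "int j - int l \<noteq> 0" using \<open>j \<noteq> l\<close> by simp
    ultimately have "\<bar>int N\<bar> \<le> \<bar>int j - int l\<bar>" by (rule dvd_imp_le_int[rotated])
    then show False using that by linarith
  qed
  have "\<exists>d. d \<in> D \<and> (\<forall>i. of_int (c j i) - 1/3 < d $ i \<and> d $ i < of_int (c j i) + 1/3)" for j
  proof -
    have "\<forall>i. (\<chi> i. (of_int (c j i) - 1/3 :: rat)) $ i < (\<chi> i. (of_int (c j i) + 1/3 :: rat)) $ i" by simp
    then obtain d where "d \<in> D" "\<forall>i. (\<chi> i. (of_int (c j i) - 1/3 :: rat)) $ i < d $ i \<and> d $ i < (\<chi> i. (of_int (c j i) + 1/3 :: rat)) $ i"
      using dense unfolding dense_in_Qn_def by blast
    then show ?thesis by auto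
  qed
  then obtain x where xD: "\<And>j. x j \<in> D"
    and xc: "\<And>j i. of_int (c j i) - 1/3 < x j $ i \<and> x j $ i < of_int (c j i) + 1/3"
    by metis
  have xless: "x j $ i < x l $ i \<longleftrightarrow> c j i < c l i" if "j < N" "l < N" "j \<noteq> l" for j l i
  proof -
    have ne: "c j i \<noteq> c l i" using cinj that by blast
    from xc[of j i] xc[of l i] have "of_int (c j i) - 1/3 < x j $ i" "x j $ i < of_int (c j i) + 1/3"
      "of_int (c l i) - 1/3 < x l $ i" "x l $ i < of_int (c l i) + 1/3" by auto
    then show ?thesis by (rule approx_less[OF ne])
  qed
  define P0 where "P0 = (\<lambda>j. (x j, x (Suc j mod N))) ` {..<N}"
  have fin: "finite P0" unfolding P0_def by simp
  have PD: "P0 \<subseteq> D \<times> D" unfolding P0_def using xD by auto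
  have tw: "twisted \<sigma> P0"
    unfolding twisted_def
  proof (intro allI impI)
    fix a b a' b' i assume "(a,b) \<in> P0" "(a',b') \<in> P0"
    then obtain j l where jl: "j < N" "l < N" "a = x j" "b = x (Suc j mod N)" "a' = x l" "b' = x (Suc l mod N)"
      unfolding P0_def by auto
    show "a $ i < a' $ i \<longleftrightarrow> b $ \<sigma> i < b' $ \<sigma> i"
    proof (cases "j = l")
      case True then show ?thesis using jl by simp
    next
      case False
      have m: "Suc j mod N < N" "Suc l mod N < N" using N2 by simp_all
      have "Suc j mod N \<noteq> Suc l mod N" using suc_mod_inj jl False by blast
      then have "b $ \<sigma> i < b' $ \<sigma> i \<longleftrightarrow> c (Suc j mod N) (\<sigma> i) < c (Suc l mod N) (\<sigma> i)"
        using xless[OF m] jl by simp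
      also have "\<dots> \<longleftrightarrow> c j i < c l i" by (simp add: c\<sigma>)
      also have "\<dots> \<longleftrightarrow> a $ i < a' $ i" using xless[OF jl(1,2) False] jl by simp
      finally show ?thesis by simp
    qed
  qed
  obtain g where g: "g \<in> Aut_D D" "\<forall>a b. (a,b) \<in> P0 \<longrightarrow> g a = b"
    using extend_aut[OF dense ncc bij fin PD tw] by blast
  have gx: "g (x j) = x (Suc j mod N)" if "j < N" for j
    using g(2) that unfolding P0_def by blast
  have "x 0 \<noteq> x 1"
  proof
    assume E: "x 0 = x 1"
    obtain i :: 'n where True by blast
    have "x 0 $ i < x 1 $ i \<longleftrightarrow> c 0 i < c 1 i" "x 1 $ i < x 0 $ i \<longleftrightarrow> c 1 i < c 0 i"
      using xless[of 0 1 i] xless[of 1 0 i] N2 by auto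
    moreover have "c 0 i \<noteq> c 1 i" using cinj[of 0 1 i] N2 by auto
    ultimately show False using E by auto
  qed
  then show ?thesis using g(1) gx xD unfolding N_def by blast
qed



type_synonym 'n rel = "((rat^'n) \<times> (rat^'n)) \<Rightarrow> bool"

definition LOs :: "(rat^'n) set \<Rightarrow> 'n rel set" where
  "LOs D = {R \<in> (D \<times> D) \<rightarrow>\<^sub>E (UNIV :: bool set).
     (\<forall>a\<in>D. \<not> R (a,a)) \<and> (\<forall>a\<in>D. \<forall>b\<in>D. a \<noteq> b \<longrightarrow> R (a,b) \<or> R (b,a)) \<and>
     (\<forall>a\<in>D. \<forall>b\<in>D. \<forall>c\<in>D. R (a,b) \<longrightarrow> R (b,c) \<longrightarrow> R (a,c))}"

definition PT :: "(rat^'n) set \<Rightarrow> 'n rel topology" where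
  "PT D = product_topology (\<lambda>_. discrete_topology (UNIV :: bool set)) (D \<times> D)"

definition LOX :: "(rat^'n) set \<Rightarrow> 'n rel topology" where
  "LOX D = subtopology (PT D) (LOs D)"

definition lact :: "(rat^'n) set \<Rightarrow> (rat^'n \<Rightarrow> rat^'n) \<Rightarrow> 'n rel \<Rightarrow> 'n rel" where
  "lact D g R = restrict (\<lambda>p. \<exists>c\<in>D. \<exists>d\<in>D. g c = fst p \<and> g d = snd p \<and> R (c,d)) (D \<times> D)"

lemma topspace_PT: "topspace (PT D) = (D \<times> D) \<rightarrow>\<^sub>E (UNIV :: bool set)"
  by (simp add: PT_def)

lemma LOs_sub: "LOs D \<subseteq> topspace (PT D)"
  by (auto simp: LOs_def topspace_PT)

lemma topspace_LOX: "topspace (LOX D) = LOs D"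
  using LOs_sub by (auto simp: LOX_def)

lemma closedin_Bs:
  assumes "p \<in> D \<times> D"
  shows "closedin (PT D) {R \<in> topspace (PT D). R p = v}"
proof -
  have "continuous_map (PT D) (discrete_topology UNIV) (\<lambda>R. R p)"
    unfolding PT_def using assms by (rule continuous_map_product_projection)
  from closedin_continuous_map_preimage[OF this, of "{v}"] show ?thesis by simp
qed

lemma closedin_LOs:
  fixes D :: "(rat^'n) set"
  shows "closedin (PT D) (LOs D)"
proof -
  define Bs where "Bs p v = {R \<in> topspace (PT D). R p = v}" for p and v :: bool
  define F1 where "F1 = (\<lambda>a. Bs (a,a) False) ` D"
  define F2 where "F2 = (\<lambda>(a,b). Bs (a,b) True \<union> Bs (b,a) True) ` {(a,b). a \<in> D \<and> b \<in> D \<and> a \<noteq> b}"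
  define F3 where "F3 = (\<lambda>(a,b,c). Bs (a,b) False \<union> Bs (b,c) False \<union> Bs (a,c) True) ` (D \<times> D \<times> D)"
  have cB: "closedin (PT D) (Bs p v)" if "p \<in> D \<times> D" for p v
    unfolding Bs_def using that by (rule closedin_Bs)
  have "LOs D = \<Inter> (insert (topspace (PT D)) (F1 \<union> F2 \<union> F3))"
  proof (rule set_eqI)
    fix R
    show "R \<in> LOs D \<longleftrightarrow> R \<in> \<Inter> (insert (topspace (PT D)) (F1 \<union> F2 \<union> F3))"
    proof
      assume R: "R \<in> LOs D"
      then have "R \<in> topspace (PT D)" using LOs_sub by blast
      moreover have "R \<in> S" if "S \<in> F1" for S
      proof -
        obtain a where "a \<in> D" "S = Bs (a,a) False" using \<open>S \<in> F1\<close> unfolding F1_def by blast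
        moreover have "\<not> R (a,a)" using R \<open>a \<in> D\<close> unfolding LOs_def by blast
        ultimately show ?thesis using \<open>R \<in> topspace (PT D)\<close> unfolding Bs_def by blast
      qed
      moreover have "R \<in> S" if "S \<in> F2" for S
      proof -
        obtain a b where "a \<in> D" "b \<in> D" "a \<noteq> b" "S = Bs (a,b) True \<union> Bs (b,a) True"
          using \<open>S \<in> F2\<close> unfolding F2_def by auto
        moreover have "R (a,b) \<or> R (b,a)" using R \<open>a \<in> D\<close> \<open>b \<in> D\<close> \<open>a \<noteq> b\<close> unfolding LOs_def by blast
        ultimately show ?thesis using \<open>R \<in> topspace (PT D)\<close> unfolding Bs_def by blast
      qed
      moreover have "R \<in> S" if "S \<in> F3" for S
      proof -
        obtain a b c where "a \<in> D" "b \<in> D" "c \<in> D" "S = Bs (a,b) False \<union> Bs (b,c) False \<union> Bs (a,c) True"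
          using \<open>S \<in> F3\<close> unfolding F3_def by auto
        moreover have "R (a,b) \<longrightarrow> R (b,c) \<longrightarrow> R (a,c)" using R \<open>a \<in> D\<close> \<open>b \<in> D\<close> \<open>c \<in> D\<close> unfolding LOs_def by blast
        ultimately show ?thesis using \<open>R \<in> topspace (PT D)\<close> unfolding Bs_def by blast
      qed
      ultimately show "R \<in> \<Inter> (insert (topspace (PT D)) (F1 \<union> F2 \<union> F3))" by blast
    next
      assume R: "R \<in> \<Inter> (insert (topspace (PT D)) (F1 \<union> F2 \<union> F3))"
      then have t: "R \<in> topspace (PT D)" by blast
      have 1: "\<not> R (a,a)" if "a \<in> D" for a
        using R that unfolding F1_def Bs_def by blast
      have 2: "R (a,b) \<or> R (b,a)" if "a \<in> D" "b \<in> D" "a \<noteq> b" for a b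
      proof -
        have "Bs (a,b) True \<union> Bs (b,a) True \<in> F2" unfolding F2_def using that by force
        then show ?thesis using R unfolding Bs_def by blast
      qed
      have 3: "R (a,c)" if "a \<in> D" "b \<in> D" "c \<in> D" "R (a,b)" "R (b,c)" for a b c
      proof -
        have "Bs (a,b) False \<union> Bs (b,c) False \<union> Bs (a,c) True \<in> F3" unfolding F3_def using that by force
        then have "R \<in> Bs (a,b) False \<union> Bs (b,c) False \<union> Bs (a,c) True" using R by blast
        then show ?thesis using that unfolding Bs_def by auto
      qed
      show "R \<in> LOs D" using t 1 2 3 unfolding LOs_def topspace_PT by blast
    qed
  qed
  moreover have "closedin (PT D) (\<Inter> (insert (topspace (PT D)) (F1 \<union> F2 \<union> F3)))"
  proof (rule closedin_Inter)
    fix S assume "S \<in> insert (topspace (PT D)) (F1 \<union> F2 \<union> F3)"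
    then consider "S = topspace (PT D)" | "S \<in> F1" | "S \<in> F2" | "S \<in> F3" by blast
    then show "closedin (PT D) S"
    proof cases
      case 1 then show ?thesis by simp
    next
      case 2 then show ?thesis unfolding F1_def using cB by auto
    next
      case 3 then show ?thesis unfolding F2_def using cB by (auto intro!: closedin_Un)
    next
      case 4 then show ?thesis unfolding F3_def using cB by (auto intro!: closedin_Un)
    qed
  qed simp
  ultimately show ?thesis by simp
qed

lemma compact_LOX: "compact_space (LOX D)"
proof -
  have "compact_space (PT D)" unfolding PT_def
    by (simp add: compact_space_product_topology compact_space_discrete_topology)
  then show ?thesis unfolding LOX_def
    by (intro compact_space_subtopology closedin_compact_space closedin_LOs)
qed

lemma Hausdorff_LOX: "Hausdorff_space (LOX D)"
  unfolding LOX_def PT_def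
  by (intro Hausdorff_space_subtopology) (simp add: Hausdorff_space_product_topology)

lemma LOs_nonempty:
  fixes D :: "(rat^'n) set"
  assumes ncc: "no_common_coord D"
  shows "LOs D \<noteq> {}"
proof -
  obtain i0 :: 'n where True by blast
  define R where "R = restrict (\<lambda>p. fst p $ i0 < snd p $ i0) (D \<times> D)"
  have "a $ i0 \<noteq> b $ i0" if "a \<in> D" "b \<in> D" "a \<noteq> b" for a b
    using ncc that unfolding no_common_coord_def by blast
  then have "R \<in> LOs D" unfolding LOs_def R_def by (auto simp: neq_iff)
  then show ?thesis by blast
qed



lemma aut_props:
  assumes "g \<in> Aut_D D"
  shows "g \<in> D \<rightarrow>\<^sub>E D" "inj_on g D" "g ` D = D"
  using assms unfolding Aut_D_def bij_betw_def by auto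

lemma inv_props:
  assumes "g \<in> Aut_D D" "a \<in> D"
  shows "inv_into D g a \<in> D" "g (inv_into D g a) = a"
    "\<And>c. c \<in> D \<Longrightarrow> g c = a \<Longrightarrow> c = inv_into D g a"
proof -
  have a: "a \<in> g ` D" using aut_props(3)[OF assms(1)] assms(2) by simp
  show "inv_into D g a \<in> D" using a by (rule inv_into_into)
  show "g (inv_into D g a) = a" using a by (rule f_inv_into_f)
  fix c assume "c \<in> D" "g c = a"
  then show "c = inv_into D g a" using aut_props(2)[OF assms(1)] by (metis inv_into_f_f)
qed

lemma lact_apply:
  assumes g: "g \<in> Aut_D D" and "a \<in> D" "b \<in> D"
  shows "lact D g R (a,b) = R (inv_into D g a, inv_into D g b)"
proof -
  have "(\<exists>c\<in>D. \<exists>d\<in>D. g c = a \<and> g d = b \<and> R (c,d)) \<longleftrightarrow> R (inv_into D g a, inv_into D g b)"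
  proof
    assume "\<exists>c\<in>D. \<exists>d\<in>D. g c = a \<and> g d = b \<and> R (c,d)"
    then obtain c d where "c \<in> D" "d \<in> D" "g c = a" "g d = b" "R (c,d)" by blast
    then show "R (inv_into D g a, inv_into D g b)"
      using inv_props(3)[OF g \<open>a \<in> D\<close>] inv_props(3)[OF g \<open>b \<in> D\<close>] by metis
  next
    assume "R (inv_into D g a, inv_into D g b)"
    then show "\<exists>c\<in>D. \<exists>d\<in>D. g c = a \<and> g d = b \<and> R (c,d)"
      using inv_props(1,2)[OF g \<open>a \<in> D\<close>] inv_props(1,2)[OF g \<open>b \<in> D\<close>] by blast
  qed
  then show ?thesis using assms unfolding lact_def by simp
qed

lemma lact_LOs:
  assumes g: "g \<in> Aut_D D" and R: "R \<in> LOs D"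
  shows "lact D g R \<in> LOs D"
proof -
  let ?i = "inv_into D g"
  have iD: "?i a \<in> D" if "a \<in> D" for a using inv_props(1)[OF g that] .
  have iinj: "?i a = ?i b \<Longrightarrow> a = b" if "a \<in> D" "b \<in> D" for a b
    using inv_props(2)[OF g] that by metis
  have R1: "\<forall>a\<in>D. \<not> R (a,a)" and R2: "\<forall>a\<in>D. \<forall>b\<in>D. a \<noteq> b \<longrightarrow> R (a,b) \<or> R (b,a)"
    and R3: "\<forall>a\<in>D. \<forall>b\<in>D. \<forall>c\<in>D. R (a,b) \<longrightarrow> R (b,c) \<longrightarrow> R (a,c)"
    using R unfolding LOs_def by blast+
  have "lact D g R \<in> (D \<times> D) \<rightarrow>\<^sub>E (UNIV :: bool set)" unfolding lact_def by simp
  moreover have "\<forall>a\<in>D. \<not> lact D g R (a,a)" using R1 iD by (simp add: lact_apply[OF g])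
  moreover have "\<forall>a\<in>D. \<forall>b\<in>D. a \<noteq> b \<longrightarrow> lact D g R (a,b) \<or> lact D g R (b,a)"
  proof (intro ballI impI)
    fix a b assume "a \<in> D" "b \<in> D" "a \<noteq> b"
    then have "?i a \<noteq> ?i b" using iinj by blast
    then show "lact D g R (a,b) \<or> lact D g R (b,a)"
      using R2 iD \<open>a \<in> D\<close> \<open>b \<in> D\<close> by (simp add: lact_apply[OF g])
  qed
  moreover have "\<forall>a\<in>D. \<forall>b\<in>D. \<forall>c\<in>D. lact D g R (a,b) \<longrightarrow> lact D g R (b,c) \<longrightarrow> lact D g R (a,c)"
  proof (intro ballI impI)
    fix a b c assume "a \<in> D" "b \<in> D" "c \<in> D" "lact D g R (a,b)" "lact D g R (b,c)"
    then have "R (?i a, ?i b)" "R (?i b, ?i c)" by (simp_all add: lact_apply[OF g])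
    then have "R (?i a, ?i c)" using R3 iD \<open>a \<in> D\<close> \<open>b \<in> D\<close> \<open>c \<in> D\<close> by blast
    then show "lact D g R (a,c)" using \<open>a \<in> D\<close> \<open>c \<in> D\<close> by (simp add: lact_apply[OF g])
  qed
  ultimately show ?thesis unfolding LOs_def by blast
qed

lemma lact_id:
  assumes R: "R \<in> LOs D"
  shows "lact D (restrict id D) R = R"
proof
  fix p
  show "lact D (restrict id D) R p = R p"
  proof (cases "p \<in> D \<times> D")
    case True then show ?thesis unfolding lact_def by (cases p) auto
  next
    case False
    have "R \<in> extensional (D \<times> D)" using R unfolding LOs_def by (auto simp: PiE_def)
    then have "R p = undefined" using False by (rule extensional_arb)
    then show ?thesis using False unfolding lact_def by simp
  qed
qed

lemma lact_comp:
  assumes g: "g \<in> Aut_D D" and h: "h \<in> Aut_D D"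
  shows "lact D (compose D g h) R = lact D g (lact D h R)"
proof
  fix p
  have hD: "h c \<in> D" if "c \<in> D" for c using aut_props(3)[OF h] that by blast
  show "lact D (compose D g h) R p = lact D g (lact D h R) p"
  proof (cases "p \<in> D \<times> D")
    case True
    have "(\<exists>c\<in>D. \<exists>d\<in>D. compose D g h c = fst p \<and> compose D g h d = snd p \<and> R (c,d)) \<longleftrightarrow>
          (\<exists>c'\<in>D. \<exists>d'\<in>D. g c' = fst p \<and> g d' = snd p \<and> lact D h R (c',d'))"
    proof
      assume "\<exists>c\<in>D. \<exists>d\<in>D. compose D g h c = fst p \<and> compose D g h d = snd p \<and> R (c,d)"
      then obtain c d where cd: "c \<in> D" "d \<in> D" "g (h c) = fst p" "g (h d) = snd p" "R (c,d)"
        by (auto simp: compose_eq)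
      have "lact D h R (h c, h d)" using cd hD unfolding lact_def by auto
      then show "\<exists>c'\<in>D. \<exists>d'\<in>D. g c' = fst p \<and> g d' = snd p \<and> lact D h R (c',d')"
        using cd hD by blast
    next
      assume "\<exists>c'\<in>D. \<exists>d'\<in>D. g c' = fst p \<and> g d' = snd p \<and> lact D h R (c',d')"
      then obtain c' d' where cd: "c' \<in> D" "d' \<in> D" "g c' = fst p" "g d' = snd p" "lact D h R (c',d')"
        by blast
      then obtain c d where "c \<in> D" "d \<in> D" "h c = c'" "h d = d'" "R (c,d)"
        unfolding lact_def by auto
      then show "\<exists>c\<in>D. \<exists>d\<in>D. compose D g h c = fst p \<and> compose D g h d = snd p \<and> R (c,d)"
        using cd by (auto simp: compose_eq)
    qed
    then show ?thesis using True unfolding lact_def[of D "compose D g h"] lact_def[of D g] by simp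
  next
    case False then show ?thesis unfolding lact_def by simp
  qed
qed

lemma topspace_AT: "topspace (Aut_topology D) = Aut_D D"
  unfolding Aut_topology_def Aut_D_def by auto

lemma lact_cont:
  fixes D :: "(rat^'n) set"
  shows "continuous_map (prod_topology (Aut_topology D) (LOX D)) (LOX D) (\<lambda>(g,R). lact D g R)"
proof -
  let ?Z = "prod_topology (Aut_topology D) (LOX D)"
  let ?f = "\<lambda>(g,R). lact D g R"
  have tZ: "topspace ?Z = Aut_D D \<times> LOs D" by (simp add: topspace_AT topspace_LOX)
  have comp: "continuous_map ?Z (discrete_topology UNIV) (\<lambda>z. ?f z k)" if k: "k \<in> D \<times> D" for k
    unfolding continuous_map_def
  proof (intro conjI allI impI)
    show "(\<lambda>z. ?f z k) \<in> topspace ?Z \<rightarrow> topspace (discrete_topology UNIV)" by simp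
    fix U :: "bool set"
    show "openin ?Z {z \<in> topspace ?Z. ?f z k \<in> U}"
    proof (subst openin_subopen, intro ballI)
      fix z assume z: "z \<in> {z \<in> topspace ?Z. ?f z k \<in> U}"
      obtain g0 R0 where z0: "z = (g0,R0)" by (cases z)
      obtain a b where ab: "k = (a,b)" by (cases k)
      have g0: "g0 \<in> Aut_D D" and R0: "R0 \<in> LOs D" using z z0 tZ by auto
      have aD: "a \<in> D" and bD: "b \<in> D" using k ab by auto
      define c0 where "c0 = inv_into D g0 a"
      define d0 where "d0 = inv_into D g0 b"
      have c0D: "c0 \<in> D" and d0D: "d0 \<in> D" unfolding c0_def d0_def using inv_props(1)[OF g0] aD bD by auto
      define A where "A = {g \<in> topspace (Aut_topology D). g c0 \<in> {a}} \<inter> {g \<in> topspace (Aut_topology D). g d0 \<in> {b}}"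
      define B where "B = {R \<in> topspace (LOX D). R (c0,d0) \<in> {R0 (c0,d0)}}"
      have pc: "continuous_map (Aut_topology D) (discrete_topology D) (\<lambda>g. g c)" if "c \<in> D" for c
        unfolding Aut_topology_def
        by (rule continuous_map_from_subtopology, rule continuous_map_product_projection[OF that])
      have oA: "openin (Aut_topology D) A"
        unfolding A_def using pc[OF c0D] pc[OF d0D] aD bD
        by (intro openin_Int openin_continuous_map_preimage) auto
      have pR: "continuous_map (LOX D) (discrete_topology UNIV) (\<lambda>R. R (c0,d0))"
        unfolding LOX_def PT_def
        by (rule continuous_map_from_subtopology, rule continuous_map_product_projection) (use c0D d0D in auto)
      have oB: "openin (LOX D) B" unfolding B_def
        by (rule openin_continuous_map_preimage[OF pR]) simp
      have "openin ?Z (A \<times> B)" using oA oB by (simp add: openin_prod_Times_iff)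
      moreover have "z \<in> A \<times> B"
        using z0 g0 R0 inv_props(2)[OF g0] aD bD unfolding A_def B_def c0_def d0_def
        by (auto simp: topspace_AT topspace_LOX)
      moreover have "A \<times> B \<subseteq> {z \<in> topspace ?Z. ?f z k \<in> U}"
      proof
        fix w assume w: "w \<in> A \<times> B"
        obtain g R where gR: "w = (g,R)" by (cases w)
        have g: "g \<in> Aut_D D" and gc: "g c0 = a" "g d0 = b" and R: "R \<in> LOs D" and Rc: "R (c0,d0) = R0 (c0,d0)"
          using w gR unfolding A_def B_def by (auto simp: topspace_AT topspace_LOX)
        have "inv_into D g a = c0" using inv_props(3)[OF g aD c0D gc(1)] by simp
        moreover have "inv_into D g b = d0" using inv_props(3)[OF g bD d0D gc(2)] by simp
        ultimately have "?f w k = R (c0,d0)" using gR ab lact_apply[OF g aD bD] by simp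
        also have "\<dots> = ?f z k" using z0 ab lact_apply[OF g0 aD bD] Rc unfolding c0_def d0_def by simp
        finally have "?f w k \<in> U" using z by simp
        then show "w \<in> {z \<in> topspace ?Z. ?f z k \<in> U}" using g R gR tZ by simp
      qed
      ultimately show "\<exists>T. openin ?Z T \<and> z \<in> T \<and> T \<subseteq> {z \<in> topspace ?Z. ?f z k \<in> U}" by blast
    qed
  qed
  have "continuous_map ?Z (PT D) ?f"
    unfolding PT_def continuous_map_componentwise
  proof
    show "?f ` topspace ?Z \<subseteq> extensional (D \<times> D)" by (auto simp: lact_def)
    show "\<forall>k\<in>D \<times> D. continuous_map ?Z (discrete_topology UNIV) (\<lambda>x. ?f x k)" using comp by blast
  qed
  moreover have "?f \<in> topspace ?Z \<rightarrow> LOs D" using tZ lact_LOs by auto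
  ultimately show ?thesis unfolding LOX_def continuous_map_in_subtopology by blast
qed



lemma cyc_contra:
  fixes x :: "nat \<Rightarrow> 'a"
  assumes N: "N \<ge> 2" and xs: "\<forall>j<N. x j \<in> S \<and> g (x j) = x (Suc j mod N)"
    and inv: "\<forall>a\<in>S. \<forall>b\<in>S. Q a b \<longrightarrow> Q (g a) (g b)"
    and tr: "\<forall>a\<in>S. \<forall>b\<in>S. \<forall>c\<in>S. Q a b \<longrightarrow> Q b c \<longrightarrow> Q a c"
    and q01: "Q (x 0) (x 1)"
  shows "Q (x 0) (x 0)"
proof -
  have xS: "x (Suc j mod N) \<in> S" for j using xs N by simp
  have step: "Q (x j) (x (Suc j mod N))" if "j < N" for j
    using that
  proof (induction j)
    case 0 then show ?case using q01 N by simp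
  next
    case (Suc j)
    then have q: "Q (x j) (x (Suc j))" by simp
    have m: "x j \<in> S" "x (Suc j) \<in> S" using xs Suc.prems by auto
    have "g (x j) = x (Suc j mod N)" using xs Suc.prems by auto
    then have e1: "g (x j) = x (Suc j)" using Suc.prems by simp
    have e2: "g (x (Suc j)) = x (Suc (Suc j) mod N)" using xs Suc.prems by blast
    have "Q (g (x j)) (g (x (Suc j)))" using inv m q by blast
    then show ?case using e1 e2 by simp
  qed
  have chain: "Q (x 0) (x (Suc j mod N))" if "j < N" for j
    using that
  proof (induction j)
    case 0
    have "Suc 0 mod N = Suc 0" using N by simp
    then show ?case using step[of 0] N by simp
  next
    case (Suc j)
    then have "Q (x 0) (x (Suc j))" by simp
    moreover have "Q (x (Suc j)) (x (Suc (Suc j) mod N))" using step Suc.prems by simp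
    moreover have "x 0 \<in> S" "x (Suc j) \<in> S" using xs N Suc.prems by simp_all
    ultimately show ?case using tr xS by blast
  qed
  have "N - 1 < N" using N by simp
  from chain[OF this] have "Q (x 0) (x (Suc (N - 1) mod N))" .
  moreover have "Suc (N - 1) mod N = 0" using N by simp
  ultimately show ?thesis by simp
qed

definition pf :: "rat^'n \<Rightarrow> rat^'n \<Rightarrow> (rat^'n \<Rightarrow> rat^'n)" where
  "pf a b = (\<lambda>z. if z = 0 then a else b)"

definition emb :: "'n rel \<Rightarrow> (rat^'n \<Rightarrow> rat^'n) set set" where
  "emb R = {{pf a b} | a b. R (a,b)}"

lemma pf_inj:
  fixes a b a' b' :: "rat^'n"
  assumes E: "pf a b = pf a' b'"
  shows "a = a' \<and> b = b'"
proof -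
  obtain i :: 'n where True by blast
  have ne: "(\<chi> i. (1::rat)) \<noteq> (0::rat^'n)"
  proof
    assume "(\<chi> i. (1::rat)) = (0::rat^'n)"
    then have "(\<chi> i. (1::rat)) $ i = (0::rat^'n) $ i" by simp
    then show False by simp
  qed
  have "pf a b 0 = pf a' b' 0" "pf a b (\<chi> i. 1) = pf a' b' (\<chi> i. 1)" using E by simp_all
  then show ?thesis using ne unfolding pf_def by simp
qed

lemma emb_mem: "{pf a b} \<in> emb R \<longleftrightarrow> R (a,b)"
  unfolding emb_def using pf_inj by blast

lemma inj_emb: "inj (emb :: ('n::finite) rel \<Rightarrow> _)"
proof (rule injI)
  fix R R' :: "('n::finite) rel" assume "emb R = emb R'"
  then have "R (a,b) = R' (a,b)" for a b using emb_mem by metis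
  then show "R = R'" by (intro ext) (metis prod.collapse)
qed

theorem proposition6p1:
  fixes D :: "(rat^'n) set"
  assumes "CARD('n) \<ge> 2"
    and "dense_in_Qn D"
    and "no_common_coord D"
  shows "\<not> extremely_amenable (Aut_D D) (compose D) (restrict id D) (Aut_topology D)
           TYPE((rat^'n \<Rightarrow> rat^'n) set set)"
proof
  assume EA: "extremely_amenable (Aut_D D) (compose D) (restrict id D) (Aut_topology D)
           TYPE((rat^'n \<Rightarrow> rat^'n) set set)"
  have EA': "extremely_amenable (Aut_D D) (compose D) (restrict id D) (Aut_topology D) TYPE('n rel)"
    by (rule EA_transfer[OF EA inj_emb])
  have hyp: "compact_space (LOX D) \<and> Hausdorff_space (LOX D) \<and> topspace (LOX D) \<noteq> {} \<and>
        continuous_map (prod_topology (Aut_topology D) (LOX D)) (LOX D) (\<lambda>(g, x). lact D g x) \<and>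
        (\<forall>x\<in>topspace (LOX D). lact D (restrict id D) x = x) \<and>
        (\<forall>g\<in>Aut_D D. \<forall>h\<in>Aut_D D. \<forall>x\<in>topspace (LOX D). lact D (compose D g h) x = lact D g (lact D h x))"
  proof (intro conjI)
    show "compact_space (LOX D)" by (rule compact_LOX)
    show "Hausdorff_space (LOX D)" by (rule Hausdorff_LOX)
    show "topspace (LOX D) \<noteq> {}" using LOs_nonempty[OF assms(3)] by (simp add: topspace_LOX)
    show "continuous_map (prod_topology (Aut_topology D) (LOX D)) (LOX D) (\<lambda>(g, x). lact D g x)"
      by (rule lact_cont)
    show "\<forall>x\<in>topspace (LOX D). lact D (restrict id D) x = x" unfolding topspace_LOX using lact_id by blast
    show "\<forall>g\<in>Aut_D D. \<forall>h\<in>Aut_D D. \<forall>x\<in>topspace (LOX D). lact D (compose D g h) x = lact D g (lact D h x)"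
      using lact_comp by blast
  qed
  have ex: "\<exists>R\<in>topspace (LOX D). \<forall>g\<in>Aut_D D. lact D g R = R"
    using EA'[unfolded extremely_amenable_def, rule_format, of "LOX D" "lact D", OF hyp] .
  obtain R where R: "R \<in> LOs D" and fix_R: "\<forall>g\<in>Aut_D D. lact D g R = R"
    using ex unfolding topspace_LOX by blast
  obtain x :: "nat \<Rightarrow> rat^'n" and g where g: "g \<in> Aut_D D"
    and xs: "\<forall>j<CARD('n). x j \<in> D \<and> g (x j) = x (Suc j mod CARD('n))" and x01: "x 0 \<noteq> x 1"
    using cycle_aut[OF assms] by blast
  have R1: "\<forall>a\<in>D. \<not> R (a,a)" and R2: "\<forall>a\<in>D. \<forall>b\<in>D. a \<noteq> b \<longrightarrow> R (a,b) \<or> R (b,a)"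
    and R3: "\<forall>a\<in>D. \<forall>b\<in>D. \<forall>c\<in>D. R (a,b) \<longrightarrow> R (b,c) \<longrightarrow> R (a,c)"
    using R unfolding LOs_def by blast+
  have gD: "g a \<in> D" if "a \<in> D" for a using aut_props(3)[OF g] that by blast
  have ginv: "R (g a, g b) \<longleftrightarrow> R (a,b)" if "a \<in> D" "b \<in> D" for a b
  proof -
    have "R (g a, g b) = lact D g R (g a, g b)" using fix_R g by simp
    also have "\<dots> = R (inv_into D g (g a), inv_into D g (g b))"
      using lact_apply[OF g gD[OF that(1)] gD[OF that(2)]] .
    also have "\<dots> = R (a,b)" using aut_props(2)[OF g] that by (simp add: inv_into_f_f)
    finally show ?thesis .
  qed
  have N2: "CARD('n) \<ge> 2" using assms(1) .
  have x0D: "x 0 \<in> D" "x 1 \<in> D" using xs N2 by auto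
  show False
  proof (cases "R (x 0, x 1)")
    case True
    have "R (x 0, x 0)"
      by (rule cyc_contra[where Q = "\<lambda>a b. R (a,b)" and S = D, OF N2 xs _ R3 True])
         (use ginv in blast)
    then show False using R1 x0D by blast
  next
    case False
    then have "R (x 1, x 0)" using R2 x0D x01 by blast
    have "(\<lambda>a b. R (b,a)) (x 0) (x 0)"
      by (rule cyc_contra[where Q = "\<lambda>a b. R (b,a)" and S = D, OF N2 xs])
         (use ginv R3 \<open>R (x 1, x 0)\<close> in blast)+
    then show False using R1 x0D by blast
  qed
qed

end
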